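(* Let $\psi\colon G\times Y\times Y\to\mathbb C$. Then $\psi\in\mathcal A$ if and only if $\psi\in\mathcal A_0$ and the linear operator $\widetilde S_\psi\colon\mathcal D\to H$ is bounded, i.e. $\sup\{\|\widetilde S_\psi f\|: f\in\mathcal D,\ \|f\|=1\}<\infty$.
   Context: Let $G$ be a locally compact abelian group (written additively) with Haar measure $\nu$, and $(Y,\lambda)$ a measure space. Let $H$ be a reproducing kernel Hilbert space of complex functions on $G\times Y$ whose inner product is that of $L^2(G\times Y,\nu\otimes\lambda)$, with reproducing kernel $(K_{x,y})_{(x,y)\in G\times Y}$ (so $f(x,y)=\langle f,K_{x,y}\rangle$). Assume $K_{x,y}(u,v)=K_{0,y}(u-x,v)$ for all $u,x\in G$, $v,y\in Y$ (so $H$ is invariant under $f\mapsto f(\cdot-a,\cdot)$). Let $\mathcal A_0$ be the set of functions $\psi\colon G\times Y\times Y\to\mathbb C$ such that $\psi(\cdot,\cdot,v)\in H$ for every $v\in Y$ and $(u,v)\mapsto\overline{\psi(-u,y,v)}$ belongs to $H$ for every $y\in Y$. For $\psi\in\mathcal A_0$, $f\in H$, define the function $(S_\psi f)(x,y)=\int_{G\times Y}f(u,v)\psi(x-u,y,v)\,d\nu(u)\,d\lambda(v)$ (absolutely convergent). Let $\mathcal A$ be the set of $\psi\in\mathcal A_0$ such that $S_\psi f\in H$ for every $f\in H$ and $f\mapsto S_\psi f$ is bounded on $H$. Let $\mathcal D=\operatorname{span}\{K_{p,q}: p\in G,\ q\in Y\}$, and for $\psi\in\mathcal A_0$ let $\widetilde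 S_\psi$ be the restriction of $f\mapsto S_\psi f$ to $\mathcal D$ (it is known that it maps $\mathcal D$ into $H$, with $(\widetilde S_\psi K_{p,q})(x,y)=\psi(x-p,y,q)$). *)

theory Defs
  imports "HOL-Analysis.Analysis"
begin

definition haar_measure :: "'g::topological_ab_group_add measure \<Rightarrow> bool" where
  "haar_measure nu \<longleftrightarrow>
     sets nu = sets borel
   \<and> (\<forall>a. distr nu nu (\<lambda>u. a + u) = nu)
   \<and> (\<forall>C. compact C \<longrightarrow> emeasure nu C < \<infinity>)
   \<and> (\<forall>U. open U \<and> U \<noteq> {} \<longrightarrow> emeasure nu U > 0)
   \<and> (\<forall>A\<in>sets borel. emeasure nu A = (INF U\<in>{U. open U \<and> A \<subseteq> U}. emeasure nu U))
   \<and> (\<forall>U. open U \<longrightarrow> emeasure nu U = (SUP C\<in>{C. compact C \<and> C \<subseteq> U}. emeasure nu C))"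

definition l2inner :: "'a measure \<Rightarrow> ('a \<Rightarrow> complex) \<Rightarrow> ('a \<Rightarrow> complex) \<Rightarrow> complex" where
  "l2inner M f g = integral\<^sup>L M (\<lambda>z. f z * cnj (g z))"

definition l2norm :: "'a measure \<Rightarrow> ('a \<Rightarrow> complex) \<Rightarrow> real" where
  "l2norm M f = sqrt (integral\<^sup>L M (\<lambda>z. (cmod (f z))\<^sup>2))"

definition rkhs_L2 :: "'a measure \<Rightarrow> ('a \<Rightarrow> complex) set \<Rightarrow> ('a \<Rightarrow> 'a \<Rightarrow> complex) \<Rightarrow> bool" where
  "rkhs_L2 M H K \<longleftrightarrow>
     (\<forall>f\<in>H. f \<in> borel_measurable M \<and> integrable M (\<lambda>z. (cmod (f z))\<^sup>2))
   \<and> (\<lambda>z. 0) \<in> H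
   \<and> (\<forall>f\<in>H. \<forall>g\<in>H. (\<lambda>z. f z + g z) \<in> H)
   \<and> (\<forall>c. \<forall>f\<in>H. (\<lambda>z. c * f z) \<in> H)
   \<and> (\<forall>s. (\<forall>n. s n \<in> H) \<and>
          (\<forall>e>0. \<exists>N. \<forall>m\<ge>N. \<forall>n\<ge>N. l2norm M (\<lambda>z. s m z - s n z) < e)
        \<longrightarrow> (\<exists>f\<in>H. (\<lambda>n. l2norm M (\<lambda>z. s n z - f z)) \<longlonglongrightarrow> 0))
   \<and> (\<forall>z. K z \<in> H)
   \<and> (\<forall>f\<in>H. \<forall>z. f z = l2inner M f (K z))"

definition A0 :: "('g::ab_group_add \<times> 'y \<Rightarrow> complex) set \<Rightarrow> ('g \<Rightarrow> 'y \<Rightarrow> 'y \<Rightarrow> complex) set" where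
  "A0 H = {psi. (\<forall>v. (\<lambda>(u,y). psi u y v) \<in> H) \<and> (\<forall>y. (\<lambda>(u,v). cnj (psi (-u) y v)) \<in> H)}"

definition S_op :: "'g::ab_group_add measure \<Rightarrow> 'y measure \<Rightarrow> ('g \<Rightarrow> 'y \<Rightarrow> 'y \<Rightarrow> complex)
    \<Rightarrow> ('g \<times> 'y \<Rightarrow> complex) \<Rightarrow> ('g \<times> 'y \<Rightarrow> complex)" where
  "S_op nu lam psi f = (\<lambda>(x,y). integral\<^sup>L (nu \<Otimes>\<^sub>M lam) (\<lambda>(u,v). f (u,v) * psi (x - u) y v))"

definition bounded_on :: "'a measure \<Rightarrow> ('a \<Rightarrow> complex) set \<Rightarrow> (('a \<Rightarrow> complex) \<Rightarrow> ('a \<Rightarrow> complex)) \<Rightarrow> bool" where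
  "bounded_on M H T \<longleftrightarrow> (\<exists>C. \<forall>f\<in>H. l2norm M (T f) \<le> C * l2norm M f)"

definition A_class :: "'g::ab_group_add measure \<Rightarrow> 'y measure \<Rightarrow> ('g \<times> 'y \<Rightarrow> complex) set
    \<Rightarrow> ('g \<Rightarrow> 'y \<Rightarrow> 'y \<Rightarrow> complex) set" where
  "A_class nu lam H = {psi. psi \<in> A0 H \<and> (\<forall>f\<in>H. S_op nu lam psi f \<in> H)
                          \<and> bounded_on (nu \<Otimes>\<^sub>M lam) H (S_op nu lam psi)}"

definition kernel_span :: "('a \<Rightarrow> 'a \<Rightarrow> complex) \<Rightarrow> ('a \<Rightarrow> complex) set" where
  "kernel_span K = {f. \<exists>F c. finite F \<and> f = (\<lambda>z. \<Sum>p\<in>F. c p * K p z)}"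

end

theory Submission
  imports Defs
begin


lemma nn_translate_le:
  fixes nu :: "'g::topological_ab_group_add measure"
  assumes sets: "sets nu = sets borel" and inv: "\<And>a. distr nu nu (\<lambda>u. a + u) = nu"
  shows "(\<integral>\<^sup>+x. F (a + x) \<partial>nu) \<le> (\<integral>\<^sup>+x. F x \<partial>nu)"
proof -
  have meas: "(\<lambda>u. b + u) \<in> measurable nu nu" for b
    unfolding measurable_cong_sets[OF sets sets]
    by (intro borel_measurable_continuous_onI continuous_intros)
  show ?thesis
    unfolding nn_integral_def[of nu "\<lambda>x. F (a+x)"]
  proof (rule SUP_least)
    fix g assume "g \<in> {g. simple_function nu g \<and> g \<le> (\<lambda>x. F (a + x))}"
    then have sg: "simple_function nu g" and le: "\<And>x. g x \<le> F (a + x)" by (auto simp: le_fun_def)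
    have gm: "g \<in> borel_measurable nu" using borel_measurable_simple_function sg by blast
    define g' where "g' = (\<lambda>x. g (-a + x))"
    have g'm: "g' \<in> borel_measurable nu" unfolding g'_def by (rule measurable_compose[OF meas gm])
    have "integral\<^sup>S nu g = integral\<^sup>N nu g" using nn_integral_eq_simple_integral[OF sg] by simp
    also have "integral\<^sup>N nu g = integral\<^sup>N nu g'"
    proof -
      have "g = (\<lambda>x. g' (a + x))" unfolding g'_def by (simp add: add.assoc[symmetric])
      then show ?thesis
        using nn_integral_distr[OF meas[of a], of g'] inv[of a] g'm by simp
    qed
    also have "\<dots> \<le> (\<integral>\<^sup>+x. F x \<partial>nu)"
      by (rule nn_integral_mono) (use le[of "-a + x" for x] in \<open>simp add: g'_def add.assoc[symmetric]\<close>)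
    finally show "integral\<^sup>S nu g \<le> (\<integral>\<^sup>+x. F x \<partial>nu)" .
  qed
qed

lemma nn_translate:
  fixes nu :: "'g::topological_ab_group_add measure"
  assumes sets: "sets nu = sets borel" and inv: "\<And>a. distr nu nu (\<lambda>u. a + u) = nu"
  shows "(\<integral>\<^sup>+x. F (a + x) \<partial>nu) = (\<integral>\<^sup>+x. F x \<partial>nu)"
proof (rule antisym)
  show "(\<integral>\<^sup>+x. F (a + x) \<partial>nu) \<le> (\<integral>\<^sup>+x. F x \<partial>nu)" by (rule nn_translate_le[OF sets inv])
  have "(\<integral>\<^sup>+x. F x \<partial>nu) = (\<integral>\<^sup>+x. (\<lambda>y. F (a + y)) (-a + x) \<partial>nu)"
    by (simp add: add.assoc[symmetric])
  also have "\<dots> \<le> (\<integral>\<^sup>+x. F (a + x) \<partial>nu)" by (rule nn_translate_le[OF sets inv])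
  finally show "(\<integral>\<^sup>+x. F x \<partial>nu) \<le> (\<integral>\<^sup>+x. F (a + x) \<partial>nu)" .
qed

lemma pair_translate:
  fixes nu :: "'g::topological_ab_group_add measure" and lam :: "'y measure"
  assumes sets: "sets nu = sets borel" and inv: "\<And>a. distr nu nu (\<lambda>u. a + u) = nu"
    and sl: "space lam = UNIV"
  shows "(\<lambda>w. (a + fst w, snd w)) \<in> measurable (nu \<Otimes>\<^sub>M lam) (nu \<Otimes>\<^sub>M lam)"
    and "distr (nu \<Otimes>\<^sub>M lam) (nu \<Otimes>\<^sub>M lam) (\<lambda>w. (a + fst w, snd w)) = nu \<Otimes>\<^sub>M lam"
proof -
  have meas: "(\<lambda>u. b + u) \<in> measurable nu nu" for b
    unfolding measurable_cong_sets[OF sets sets]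
    by (intro borel_measurable_continuous_onI continuous_intros)
  have sn: "space nu = UNIV" using sets_eq_imp_space_eq[OF sets] by simp
  show T: "(\<lambda>w. (a + fst w, snd w)) \<in> measurable (nu \<Otimes>\<^sub>M lam) (nu \<Otimes>\<^sub>M lam)"
    by (intro measurable_Pair measurable_compose[OF measurable_fst meas] measurable_snd)
  define \<Omega> where "\<Omega> = space nu \<times> space lam"
  define A where "A = {a \<times> b | a b. a \<in> sets nu \<and> b \<in> sets lam}"
  define \<mu> where "\<mu> = (\<lambda>X. \<integral>\<^sup>+x. (\<integral>\<^sup>+y. indicator X (x,y) \<partial>lam) \<partial>nu)"
  have E: "emeasure (nu \<Otimes>\<^sub>M lam) X = (if X \<in> sigma_sets \<Omega> A \<and> measure_space \<Omega> (sigma_sets \<Omega> A) \<mu> then \<mu> X else 0)" for X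
    unfolding pair_measure_def \<Omega>_def A_def \<mu>_def by (simp only: emeasure_measure_of_conv)
  have S: "sets (nu \<Otimes>\<^sub>M lam) = sigma_sets \<Omega> A"
    unfolding \<Omega>_def A_def by (rule sets_pair_measure)
  show "distr (nu \<Otimes>\<^sub>M lam) (nu \<Otimes>\<^sub>M lam) (\<lambda>w. (a + fst w, snd w)) = nu \<Otimes>\<^sub>M lam"
  proof (rule measure_eqI)
    fix X assume X: "X \<in> sets (distr (nu \<Otimes>\<^sub>M lam) (nu \<Otimes>\<^sub>M lam) (\<lambda>w. (a + fst w, snd w)))"
    then have X': "X \<in> sets (nu \<Otimes>\<^sub>M lam)" by simp
    define Y where "Y = (\<lambda>w. (a + fst w, snd w)) -` X \<inter> space (nu \<Otimes>\<^sub>M lam)"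
    have Y: "Y \<in> sets (nu \<Otimes>\<^sub>M lam)" unfolding Y_def using T X' by (rule measurable_sets)
    have "\<mu> Y = \<mu> X"
    proof -
      have "\<mu> Y = (\<integral>\<^sup>+x. (\<lambda>x. \<integral>\<^sup>+y. indicator X (x,y) \<partial>lam) (a + x) \<partial>nu)"
        unfolding \<mu>_def Y_def by (simp add: space_pair_measure sn sl indicator_def)
      also have "\<dots> = \<mu> X" unfolding \<mu>_def by (rule nn_translate[OF sets inv])
      finally show ?thesis .
    qed
    then show "emeasure (distr (nu \<Otimes>\<^sub>M lam) (nu \<Otimes>\<^sub>M lam) (\<lambda>w. (a + fst w, snd w))) X = emeasure (nu \<Otimes>\<^sub>M lam) X"
      using X' Y S by (simp add: emeasure_distr[OF T X'] E Y_def[symmetric])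
  qed simp
qed




definition L2 :: "'a measure \<Rightarrow> ('a \<Rightarrow> complex) \<Rightarrow> bool" where
  "L2 M f \<longleftrightarrow> f \<in> borel_measurable M \<and> integrable M (\<lambda>z. (cmod (f z))\<^sup>2)"

definition N2 :: "'a measure \<Rightarrow> ('a \<Rightarrow> complex) \<Rightarrow> real" where
  "N2 M f = integral\<^sup>L M (\<lambda>z. (cmod (f z))\<^sup>2)"

lemma N2_nonneg: "0 \<le> N2 M f"
  unfolding N2_def by (rule integral_nonneg_AE, rule AE_I2) simp

lemma l2norm_N2: "l2norm M f = sqrt (N2 M f)"
  unfolding l2norm_def N2_def ..

lemma l2norm_sq: "(l2norm M f)\<^sup>2 = N2 M f"
  unfolding l2norm_N2 using N2_nonneg by simp

lemma l2norm_nonneg: "0 \<le> l2norm M f"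
  unfolding l2norm_N2 using N2_nonneg by simp

lemma L2_meas: "L2 M f \<Longrightarrow> f \<in> borel_measurable M"
  unfolding L2_def by simp

lemma L2_int: "L2 M f \<Longrightarrow> integrable M (\<lambda>z. (cmod (f z))\<^sup>2)"
  unfolding L2_def by simp

lemma pt_add_bound: "(cmod (x + y))\<^sup>2 \<le> 2 * (cmod x)\<^sup>2 + 2 * (cmod y)\<^sup>2"
proof -
  have "cmod (x + y) \<le> cmod x + cmod y" by (rule norm_triangle_ineq)
  then have "(cmod (x + y))\<^sup>2 \<le> (cmod x + cmod y)\<^sup>2" by (simp add: power_mono)
  also have "\<dots> \<le> 2 * (cmod x)\<^sup>2 + 2 * (cmod y)\<^sup>2"
    using sum_squares_bound[of "cmod x" "cmod y"] by (simp add: power2_sum)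
  finally show ?thesis .
qed

lemma L2_add: "L2 M f \<Longrightarrow> L2 M g \<Longrightarrow> L2 M (\<lambda>z. f z + g z)"
  unfolding L2_def
proof (intro conjI)
  assume a: "f \<in> borel_measurable M \<and> integrable M (\<lambda>z. (cmod (f z))\<^sup>2)"
     "g \<in> borel_measurable M \<and> integrable M (\<lambda>z. (cmod (g z))\<^sup>2)"
  then have [measurable]: "f \<in> borel_measurable M" "g \<in> borel_measurable M" by auto
  show m: "(\<lambda>z. f z + g z) \<in> borel_measurable M" by measurable
  show "integrable M (\<lambda>z. (cmod (f z + g z))\<^sup>2)"
  proof (rule Bochner_Integration.integrable_bound)
    show "integrable M (\<lambda>z. 2 * (cmod (f z))\<^sup>2 + 2 * (cmod (g z))\<^sup>2)" using a by simp
    show "(\<lambda>z. (cmod (f z + g z))\<^sup>2) \<in> borel_measurable M" using m by measurable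
    show "AE x in M. norm ((cmod (f x + g x))\<^sup>2) \<le> norm (2 * (cmod (f x))\<^sup>2 + 2 * (cmod (g x))\<^sup>2)"
      using pt_add_bound by (auto intro!: AE_I2 simp del: norm_triangle_ineq)
  qed
qed

lemma L2_scale: "L2 M f \<Longrightarrow> L2 M (\<lambda>z. c * f z)"
  unfolding L2_def
proof (elim conjE, intro conjI)
  assume [measurable]: "f \<in> borel_measurable M" and "integrable M (\<lambda>z. (cmod (f z))\<^sup>2)"
  then show "(\<lambda>z. c * f z) \<in> borel_measurable M" by measurable
  show "integrable M (\<lambda>z. (cmod (c * f z))\<^sup>2)" using \<open>integrable M (\<lambda>z. (cmod (f z))\<^sup>2)\<close>
    by (simp add: norm_mult power_mult_distrib)
qed

lemma L2_diff: "L2 M f \<Longrightarrow> L2 M g \<Longrightarrow> L2 M (\<lambda>z. f z - g z)"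
  using L2_add[of M f "\<lambda>z. (-1) * g z"] L2_scale[of M g "-1"] by simp

lemma L2_zero: "L2 M (\<lambda>z. 0)"
  unfolding L2_def by simp

lemma L2_sum: "finite F \<Longrightarrow> (\<And>p. p \<in> F \<Longrightarrow> L2 M (G p)) \<Longrightarrow> L2 M (\<lambda>z. \<Sum>p\<in>F. c p * G p z)"
proof (induction F rule: finite_induct)
  case empty then show ?case by (simp add: L2_zero)
next
  case (insert x F)
  then show ?case using L2_add[OF L2_scale[of M "G x" "c x"]] by simp
qed

lemma L2_prod_int: assumes "L2 M f" "L2 M g"
  shows "integrable M (\<lambda>z. f z * cnj (g z))"
proof (rule Bochner_Integration.integrable_bound)
  show "integrable M (\<lambda>z. (cmod (f z))\<^sup>2 + (cmod (g z))\<^sup>2)" using assms unfolding L2_def by simp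
  have [measurable]: "f \<in> borel_measurable M" "g \<in> borel_measurable M" using assms unfolding L2_def by auto
  have "(\<lambda>z. cnj (g z)) \<in> borel_measurable M"
    using borel_measurable_continuous_onI[OF continuous_on_cnj[OF continuous_on_id]] by measurable
  then show "(\<lambda>z. f z * cnj (g z)) \<in> borel_measurable M" by measurable
  show "AE x in M. norm (f x * cnj (g x)) \<le> norm ((cmod (f x))\<^sup>2 + (cmod (g x))\<^sup>2)"
  proof (rule AE_I2)
    fix x
    have "2 * cmod (f x) * cmod (g x) \<le> (cmod (f x))\<^sup>2 + (cmod (g x))\<^sup>2" by (rule sum_squares_bound)
    then have "2 * (cmod (f x) * cmod (g x)) \<le> (cmod (f x))\<^sup>2 + (cmod (g x))\<^sup>2" by (simp add: mult.assoc)
    moreover have "0 \<le> cmod (f x) * cmod (g x)" by simp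
    ultimately have "cmod (f x) * cmod (g x) \<le> (cmod (f x))\<^sup>2 + (cmod (g x))\<^sup>2" by linarith
    then show "norm (f x * cnj (g x)) \<le> norm ((cmod (f x))\<^sup>2 + (cmod (g x))\<^sup>2)"
      by (simp add: norm_mult)
  qed
qed

lemma L2_abs_int: assumes "L2 M f" "L2 M g"
  shows "integrable M (\<lambda>z. cmod (f z) * cmod (g z))"
  using integrable_norm[OF L2_prod_int[OF assms]] by (simp add: norm_mult)

lemma CS_real:
  fixes A B I :: real
  assumes t: "\<And>t. t > 0 \<Longrightarrow> 2 * t * I \<le> t\<^sup>2 * A + B" and A: "0 \<le> A" and B: "0 \<le> B" and I: "0 \<le> I"
  shows "I \<le> sqrt A * sqrt B"
proof (cases "I = 0")
  case True then show ?thesis using A B by simp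
next
  case False
  then have Ip: "I > 0" using I by simp
  show ?thesis
  proof (cases "A = 0")
    case True
    have "2 * ((B + 1) / (2 * I)) * I \<le> B" using t[of "(B + 1) / (2 * I)"] True Ip B by simp
    then show ?thesis using Ip by simp
  next
    case False
    then have Ap: "A > 0" using A by simp
    show ?thesis
    proof (cases "B = 0")
      case True
      have "2 * (I / A) * I \<le> (I / A)\<^sup>2 * A" using t[of "I / A"] True Ip Ap by simp
      moreover have "(I / A)\<^sup>2 * A = I * I / A" using Ap by (simp add: power2_eq_square)
      moreover have "2 * (I / A) * I = 2 * (I * I / A)" by simp
      ultimately have "I * I / A \<le> 0" by linarith
      moreover have "I * I / A > 0" using Ip Ap by simp
      ultimately show ?thesis by linarith
    next
      case False
      then have Bp: "B > 0" using B by simp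
      define t where "t = sqrt B / sqrt A"
      have tp: "t > 0" unfolding t_def using Ap Bp by simp
      have "t\<^sup>2 * A = B" unfolding t_def using Ap Bp by (simp add: power_divide)
      then have "2 * t * I \<le> 2 * B" using t[OF tp] by simp
      then have "t * I \<le> B" by simp
      then have "I \<le> B / t" using tp by (simp add: field_simps)
      also have "B / t = sqrt A * sqrt B" unfolding t_def using Ap Bp
        by (simp add: field_simps)
      finally show ?thesis .
    qed
  qed
qed

lemma CS: assumes f: "L2 M f" and g: "L2 M g"
  shows "cmod (l2inner M f g) \<le> l2norm M f * l2norm M g"
proof -
  define I where "I = integral\<^sup>L M (\<lambda>z. cmod (f z) * cmod (g z))"
  have "cmod (l2inner M f g) \<le> integral\<^sup>L M (\<lambda>z. norm (f z * cnj (g z)))"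
    unfolding l2inner_def by (rule integral_norm_bound)
  also have "\<dots> = I" unfolding I_def by (simp add: norm_mult)
  also have "I \<le> sqrt (N2 M f) * sqrt (N2 M g)"
  proof (rule CS_real)
    fix t :: real assume "t > 0"
    have "integral\<^sup>L M (\<lambda>z. 2 * t * (cmod (f z) * cmod (g z))) \<le> integral\<^sup>L M (\<lambda>z. t\<^sup>2 * (cmod (f z))\<^sup>2 + (cmod (g z))\<^sup>2)"
    proof (rule integral_mono)
      show "integrable M (\<lambda>z. 2 * t * (cmod (f z) * cmod (g z)))" using L2_abs_int[OF f g] by simp
      show "integrable M (\<lambda>z. t\<^sup>2 * (cmod (f z))\<^sup>2 + (cmod (g z))\<^sup>2)" using f g unfolding L2_def by simp
      fix z
      show "2 * t * (cmod (f z) * cmod (g z)) \<le> t\<^sup>2 * (cmod (f z))\<^sup>2 + (cmod (g z))\<^sup>2"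
        using sum_squares_bound[of "t * cmod (f z)" "cmod (g z)"] by (simp add: power_mult_distrib mult.assoc)
    qed
    then show "2 * t * I \<le> t\<^sup>2 * N2 M f + N2 M g"
      using f g unfolding I_def N2_def L2_def by simp
  qed (auto simp: N2_nonneg I_def intro!: Bochner_Integration.integral_nonneg)
  finally show ?thesis unfolding l2norm_N2 .
qed

lemma pt_expand: "(cmod (x + y))\<^sup>2 = (cmod x)\<^sup>2 + 2 * Re (x * cnj y) + (cmod y)\<^sup>2"
  unfolding cmod_power2 by (simp add: algebra_simps power2_eq_square)

lemma N2_expand: assumes a: "L2 M a" and b: "L2 M b"
  shows "N2 M (\<lambda>z. a z + b z) = N2 M a + 2 * Re (l2inner M a b) + N2 M b"
proof -
  have ia: "integrable M (\<lambda>z. (cmod (a z))\<^sup>2)" and ib: "integrable M (\<lambda>z. (cmod (b z))\<^sup>2)"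
    using a b unfolding L2_def by auto
  have iab0: "integrable M (\<lambda>z. Re (a z * cnj (b z)))"
    by (rule integrable_Re) (rule L2_prod_int[OF a b])
  have iab: "integrable M (\<lambda>z. 2 * Re (a z * cnj (b z)))"
    by (rule integrable_mult_right) (rule iab0)
  have "N2 M (\<lambda>z. a z + b z) = integral\<^sup>L M (\<lambda>z. ((cmod (a z))\<^sup>2 + 2 * Re (a z * cnj (b z))) + (cmod (b z))\<^sup>2)"
    unfolding N2_def pt_expand ..
  also have "\<dots> = integral\<^sup>L M (\<lambda>z. (cmod (a z))\<^sup>2 + 2 * Re (a z * cnj (b z))) + N2 M b"
    unfolding N2_def by (rule Bochner_Integration.integral_add) (use ia ib iab in auto)
  also have "integral\<^sup>L M (\<lambda>z. (cmod (a z))\<^sup>2 + 2 * Re (a z * cnj (b z))) = N2 M a + integral\<^sup>L M (\<lambda>z. 2 * Re (a z * cnj (b z)))"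
    unfolding N2_def by (rule Bochner_Integration.integral_add) (use ia ib iab in auto)
  also have "integral\<^sup>L M (\<lambda>z. 2 * Re (a z * cnj (b z))) = 2 * integral\<^sup>L M (\<lambda>z. Re (a z * cnj (b z)))"
    by (rule integral_mult_right_zero)
  also have "integral\<^sup>L M (\<lambda>z. Re (a z * cnj (b z))) = Re (l2inner M a b)"
    unfolding l2inner_def by (rule integral_Re[OF L2_prod_int[OF a b]])
  finally show ?thesis .
qed

lemma N2_scale: "N2 M (\<lambda>z. c * f z) = (cmod c)\<^sup>2 * N2 M f"
  unfolding N2_def by (simp add: norm_mult power_mult_distrib)

lemma l2norm_scale: "l2norm M (\<lambda>z. c * f z) = cmod c * l2norm M f"
  unfolding l2norm_N2 N2_scale by (simp add: real_sqrt_mult)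

lemma l2norm_commute: "l2norm M (\<lambda>z. f z - g z) = l2norm M (\<lambda>z. g z - f z)"
  unfolding l2norm_def by (simp add: norm_minus_commute)

lemma l2norm_zero: "l2norm M (\<lambda>z. 0) = 0"
  unfolding l2norm_def by simp

lemma l2norm_triangle: assumes a: "L2 M a" and b: "L2 M b"
  shows "l2norm M (\<lambda>z. a z + b z) \<le> l2norm M a + l2norm M b"
proof -
  have "Re (l2inner M a b) \<le> cmod (l2inner M a b)" by (rule complex_Re_le_cmod)
  also have "\<dots> \<le> l2norm M a * l2norm M b" by (rule CS[OF a b])
  finally have "N2 M (\<lambda>z. a z + b z) \<le> (l2norm M a + l2norm M b)\<^sup>2"
    unfolding N2_expand[OF a b] by (simp add: power2_sum l2norm_sq)
  then show ?thesis unfolding l2norm_N2[of M "\<lambda>z. a z + b z"]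
    by (rule real_le_lsqrt[rotated]) (simp add: l2norm_nonneg)
qed

lemma l2norm_tri3: assumes a: "L2 M a" and b: "L2 M b" and c: "L2 M c"
  shows "l2norm M (\<lambda>z. a z - c z) \<le> l2norm M (\<lambda>z. a z - b z) + l2norm M (\<lambda>z. b z - c z)"
  using l2norm_triangle[OF L2_diff[OF a b] L2_diff[OF b c]] by simp

lemma l2inner_add_left: "L2 M a \<Longrightarrow> L2 M b \<Longrightarrow> L2 M h \<Longrightarrow>
  l2inner M (\<lambda>z. a z + b z) h = l2inner M a h + l2inner M b h"
  unfolding l2inner_def using L2_prod_int[of M a h] L2_prod_int[of M b h] by (simp add: distrib_right)

lemma l2inner_scale_left: "l2inner M (\<lambda>z. c * a z) h = c * l2inner M a h"
  unfolding l2inner_def by (simp add: mult.assoc)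

lemma l2inner_scale_right: "l2inner M a (\<lambda>z. c * h z) = cnj c * l2inner M a h"
  unfolding l2inner_def by (simp add: mult.assoc mult.left_commute)

lemma l2inner_diff_left: "L2 M a \<Longrightarrow> L2 M b \<Longrightarrow> L2 M h \<Longrightarrow>
  l2inner M (\<lambda>z. a z - b z) h = l2inner M a h - l2inner M b h"
  unfolding l2inner_def using L2_prod_int[of M a h] L2_prod_int[of M b h] by (simp add: left_diff_distrib)

lemma l2inner_cnj: "l2inner M g f = cnj (l2inner M f g)"
  unfolding l2inner_def Bochner_Integration.integral_cnj[symmetric] by (simp add: mult.commute)

lemma l2inner_sum_left: "finite F \<Longrightarrow> (\<And>p. p \<in> F \<Longrightarrow> L2 M (G p)) \<Longrightarrow> L2 M h \<Longrightarrow>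
  l2inner M (\<lambda>z. \<Sum>p\<in>F. c p * G p z) h = (\<Sum>p\<in>F. c p * l2inner M (G p) h)"
proof (induction F rule: finite_induct)
  case empty then show ?case by (simp add: l2inner_def)
next
  case (insert x F)
  have "l2inner M (\<lambda>z. \<Sum>p\<in>insert x F. c p * G p z) h
      = l2inner M (\<lambda>z. c x * G x z + (\<Sum>p\<in>F. c p * G p z)) h" using insert by simp
  also have "\<dots> = l2inner M (\<lambda>z. c x * G x z) h + l2inner M (\<lambda>z. \<Sum>p\<in>F. c p * G p z) h"
    by (rule l2inner_add_left) (use insert.prems insert.hyps in \<open>auto intro!: L2_scale L2_sum\<close>)
  finally show ?case using insert by (simp add: l2inner_scale_left)
qed




lemma N2_commute: "N2 M (\<lambda>z. f z - g z) = N2 M (\<lambda>z. g z - f z)"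
  unfolding N2_def by (simp add: norm_minus_commute)

lemma inner_conv:
  assumes h: "L2 M h" and s: "\<And>n. L2 M (s n)" and f: "L2 M f"
    and c: "(\<lambda>n. l2norm M (\<lambda>z. s n z - f z)) \<longlonglongrightarrow> 0"
  shows "(\<lambda>n. l2inner M (s n) h) \<longlonglongrightarrow> l2inner M f h"
proof (rule LIM_zero_cancel, rule Lim_null_comparison)
  show "\<forall>\<^sub>F n in sequentially. norm (l2inner M (s n) h - l2inner M f h) \<le> l2norm M (\<lambda>z. s n z - f z) * l2norm M h"
  proof (rule always_eventually, rule allI)
    fix n
    have "l2inner M (s n) h - l2inner M f h = l2inner M (\<lambda>z. s n z - f z) h"
      by (rule l2inner_diff_left[symmetric]) (use s f h in auto)
    also have "norm \<dots> \<le> l2norm M (\<lambda>z. s n z - f z) * l2norm M h"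
      by (simp add: CS[OF L2_diff[OF s f] h])
    finally show "norm (l2inner M (s n) h - l2inner M f h) \<le> l2norm M (\<lambda>z. s n z - f z) * l2norm M h" .
  qed
  show "(\<lambda>n. l2norm M (\<lambda>z. s n z - f z) * l2norm M h) \<longlonglongrightarrow> 0"
    using tendsto_mult_left_zero[OF c] by simp
qed

lemma conv_cauchy:
  assumes s: "\<And>n. L2 M (s n)" and f: "L2 M f"
    and c: "(\<lambda>n. l2norm M (\<lambda>z. s n z - f z)) \<longlonglongrightarrow> 0"
  shows "\<forall>e>0. \<exists>N. \<forall>m\<ge>N. \<forall>n\<ge>N. l2norm M (\<lambda>z. s m z - s n z) < e"
proof (intro allI impI)
  fix e :: real assume e: "e > 0"
  then have "e / 2 > 0" by simp
  from c[unfolded lim_sequentially, rule_format, OF this]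
  obtain N where "\<forall>n\<ge>N. dist (l2norm M (\<lambda>z. s n z - f z)) 0 < e / 2" by blast
  then have N: "\<And>n. n \<ge> N \<Longrightarrow> l2norm M (\<lambda>z. s n z - f z) < e / 2"
    by (simp add: dist_real_def abs_of_nonneg[OF l2norm_nonneg])
  show "\<exists>N. \<forall>m\<ge>N. \<forall>n\<ge>N. l2norm M (\<lambda>z. s m z - s n z) < e"
  proof (intro exI allI impI)
    fix m n assume "m \<ge> N" "n \<ge> N"
    have "l2norm M (\<lambda>z. s m z - s n z) \<le> l2norm M (\<lambda>z. s m z - f z) + l2norm M (\<lambda>z. f z - s n z)"
      by (rule l2norm_tri3[OF s f s])
    also have "\<dots> = l2norm M (\<lambda>z. s m z - f z) + l2norm M (\<lambda>z. s n z - f z)"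
      by (simp add: l2norm_commute[of M f])
    also have "\<dots> < e / 2 + e / 2" using N \<open>m \<ge> N\<close> \<open>n \<ge> N\<close> by (intro add_strict_mono) auto
    finally show "l2norm M (\<lambda>z. s m z - s n z) < e" by simp
  qed
qed

locale rk =
  fixes M :: "'a measure" and H :: "('a \<Rightarrow> complex) set" and K :: "'a \<Rightarrow> 'a \<Rightarrow> complex"
  assumes rk: "rkhs_L2 M H K"
begin

lemma H_L2: "f \<in> H \<Longrightarrow> L2 M f"
  using rk unfolding rkhs_L2_def L2_def by auto

lemma H_zero: "(\<lambda>z. 0) \<in> H"
  using rk unfolding rkhs_L2_def by auto

lemma H_add: "f \<in> H \<Longrightarrow> g \<in> H \<Longrightarrow> (\<lambda>z. f z + g z) \<in> H"
  using rk unfolding rkhs_L2_def by auto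

lemma H_scale: "f \<in> H \<Longrightarrow> (\<lambda>z. c * f z) \<in> H"
  using rk unfolding rkhs_L2_def by auto

lemma H_diff: "f \<in> H \<Longrightarrow> g \<in> H \<Longrightarrow> (\<lambda>z. f z - g z) \<in> H"
  using H_add[of f "\<lambda>z. (-1) * g z"] H_scale[of g "-1"] by simp

lemma K_in: "K z \<in> H"
  using rk unfolding rkhs_L2_def by auto

lemma rep: "f \<in> H \<Longrightarrow> f z = l2inner M f (K z)"
  using rk unfolding rkhs_L2_def by auto

lemma H_complete:
  assumes "\<And>n. s n \<in> H" "\<forall>e>0. \<exists>N. \<forall>m\<ge>N. \<forall>n\<ge>N. l2norm M (\<lambda>z. s m z - s n z) < e"
  shows "\<exists>f\<in>H. (\<lambda>n. l2norm M (\<lambda>z. s n z - f z)) \<longlonglongrightarrow> 0"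
  using rk assms unfolding rkhs_L2_def by blast

lemma H_sum: "finite F \<Longrightarrow> (\<And>p. p \<in> F \<Longrightarrow> G p \<in> H) \<Longrightarrow> (\<lambda>z. \<Sum>p\<in>F. c p * G p z) \<in> H"
proof (induction F rule: finite_induct)
  case empty then show ?case using H_zero by simp
next
  case (insert x F)
  then show ?case using H_add[OF H_scale[of "G x" "c x"]] by simp
qed

lemma ks_sub: "d \<in> kernel_span K \<Longrightarrow> d \<in> H"
  unfolding kernel_span_def using H_sum K_in by blast

lemma ks_L2: "d \<in> kernel_span K \<Longrightarrow> L2 M d"
  using ks_sub H_L2 by blast

lemma ks_K: "K p \<in> kernel_span K"
  unfolding kernel_span_def by (intro CollectI exI[of _ "{p}"] exI[of _ "\<lambda>_. 1"]) auto

lemma ks_zero: "(\<lambda>z. 0) \<in> kernel_span K"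
  unfolding kernel_span_def by (intro CollectI exI[of _ "{}"]) auto

lemma ks_scale: "d \<in> kernel_span K \<Longrightarrow> (\<lambda>z. a * d z) \<in> kernel_span K"
  unfolding kernel_span_def
proof (elim CollectE exE conjE, intro CollectI)
  fix F c assume "finite F" "d = (\<lambda>z. \<Sum>p\<in>F. c p * K p z)"
  then show "\<exists>F c. finite F \<and> (\<lambda>z. a * d z) = (\<lambda>z. \<Sum>p\<in>F. c p * K p z)"
    by (intro exI[of _ F] exI[of _ "\<lambda>p. a * c p"]) (auto simp: sum_distrib_left mult.assoc)
qed

lemma ks_add: "d \<in> kernel_span K \<Longrightarrow> e \<in> kernel_span K \<Longrightarrow> (\<lambda>z. d z + e z) \<in> kernel_span K"
  unfolding kernel_span_def
proof (elim CollectE exE conjE, intro CollectI)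
  fix F c F' c' assume F: "finite F" "d = (\<lambda>z. \<Sum>p\<in>F. c p * K p z)"
    and F': "finite F'" "e = (\<lambda>z. \<Sum>p\<in>F'. c' p * K p z)"
  define C where "C = (\<lambda>p. (if p \<in> F then c p else 0) + (if p \<in> F' then c' p else 0))"
  have "(\<lambda>z. d z + e z) = (\<lambda>z. \<Sum>p\<in>F \<union> F'. C p * K p z)"
  proof
    fix z
    have "(\<Sum>p\<in>F \<union> F'. C p * K p z) = (\<Sum>p\<in>F \<union> F'. (if p \<in> F then c p else 0) * K p z) + (\<Sum>p\<in>F \<union> F'. (if p \<in> F' then c' p else 0) * K p z)"
      unfolding C_def by (simp only: distrib_right sum.distrib)
    also have "(\<Sum>p\<in>F \<union> F'. (if p \<in> F then c p else 0) * K p z) = (\<Sum>p\<in>F. c p * K p z)"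
      by (rule sum.mono_neutral_cong_right) (use F F' in auto)
    also have "(\<Sum>p\<in>F \<union> F'. (if p \<in> F' then c' p else 0) * K p z) = (\<Sum>p\<in>F'. c' p * K p z)"
      by (rule sum.mono_neutral_cong_right) (use F F' in auto)
    finally show "d z + e z = (\<Sum>p\<in>F \<union> F'. C p * K p z)" using F F' by simp
  qed
  then show "\<exists>F c. finite F \<and> (\<lambda>z. d z + e z) = (\<lambda>z. \<Sum>p\<in>F. c p * K p z)"
    using F F' by blast
qed

lemma ks_diff: "d \<in> kernel_span K \<Longrightarrow> e \<in> kernel_span K \<Longrightarrow> (\<lambda>z. d z - e z) \<in> kernel_span K"
  using ks_add[of d "\<lambda>z. (-1) * e z"] ks_scale[of e "-1"] by simp

lemma zero_norm: assumes f: "f \<in> H" and n: "l2norm M f = 0" shows "f z = 0"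
proof -
  have "cmod (f z) = cmod (l2inner M f (K z))" using rep[OF f] by simp
  also have "\<dots> \<le> l2norm M f * l2norm M (K z)" by (rule CS[OF H_L2[OF f] H_L2[OF K_in]])
  finally show ?thesis using n by simp
qed

lemma ptw:
  assumes s: "\<And>n. s n \<in> H" and g: "g \<in> H" and c: "(\<lambda>n. l2norm M (\<lambda>z. s n z - g z)) \<longlonglongrightarrow> 0"
  shows "(\<lambda>n. s n z) \<longlonglongrightarrow> g z"
proof -
  have "(\<lambda>n. l2inner M (s n) (K z)) \<longlonglongrightarrow> l2inner M g (K z)"
    by (rule inner_conv[OF H_L2[OF K_in] H_L2[OF s] H_L2[OF g] c])
  then show ?thesis using rep[OF s] rep[OF g] by simp
qed

end



lemma N2_minus_scale: assumes a: "L2 M a" and k: "L2 M k"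
  shows "N2 M (\<lambda>w. a w + (- t) * k w) = N2 M a - 2 * Re (cnj t * l2inner M a k) + (cmod t)\<^sup>2 * N2 M k"
proof -
  have e: "N2 M (\<lambda>w. a w + (-t) * k w) = N2 M a + 2 * Re (cnj (-t) * l2inner M a k) + (cmod (-t))\<^sup>2 * N2 M k"
    using N2_expand[OF a L2_scale[OF k, of "-t"]] by (simp only: l2inner_scale_right N2_scale)
  show ?thesis unfolding e by simp
qed

lemma small_orth:
  fixes s x q :: real
  assumes s: "s > 0" and sq: "s * q < 1" and x: "0 \<le> x" and le: "2 * s * x \<le> s\<^sup>2 * x * q"
  shows "x \<le> 0"
proof -
  have "s * x * (s * q) \<le> s * x * 1" using s x sq by (intro mult_left_mono) auto
  then have "2 * (s * x) \<le> s * x" using le by (simp add: power2_eq_square algebra_simps)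
  then have "s * x \<le> 0" by linarith
  then show ?thesis using s by (simp add: mult_le_0_iff)
qed

context rk begin

lemma density:
  assumes f: "f \<in> H"
  shows "\<exists>d. (\<forall>n. d n \<in> kernel_span K) \<and> (\<lambda>n. l2norm M (\<lambda>z. d n z - f z)) \<longlonglongrightarrow> 0"
proof -
  define Q where "Q = (\<lambda>d. N2 M (\<lambda>z. f z - d z)) ` kernel_span K"
  define \<eta> where "\<eta> = Inf Q"
  have Qne: "Q \<noteq> {}" unfolding Q_def using ks_zero by blast
  have Qbdd: "bdd_below Q" unfolding Q_def using N2_nonneg by (intro bdd_belowI[of _ 0]) auto
  have \<eta>_le: "\<eta> \<le> N2 M (\<lambda>z. f z - d z)" if "d \<in> kernel_span K" for d
    unfolding \<eta>_def by (rule cInf_lower[OF _ Qbdd]) (use that Q_def in auto)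
  have "\<exists>d. d \<in> kernel_span K \<and> N2 M (\<lambda>z. f z - d z) < \<eta> + inverse (real (Suc n))" for n
  proof -
    have "Inf Q < \<eta> + inverse (real (Suc n))" unfolding \<eta>_def by simp
    from cInf_lessD[OF Qne this] show ?thesis unfolding Q_def by auto
  qed
  then obtain d where dks: "\<And>n. d n \<in> kernel_span K"
    and dle: "\<And>n. N2 M (\<lambda>z. f z - d n z) < \<eta> + inverse (real (Suc n))" by metis
  have dL2: "L2 M (d n)" for n using ks_L2[OF dks] .
  have fL2: "L2 M f" using H_L2[OF f] .
  have csq: "N2 M (\<lambda>z. d m z - d n z) \<le> 2 * inverse (real (Suc m)) + 2 * inverse (real (Suc n))" for m n
  proof -
    define a where "a = (\<lambda>z. f z - d m z)"
    define b where "b = (\<lambda>z. f z - d n z)"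
    have aL: "L2 M a" unfolding a_def by (rule L2_diff[OF fL2 dL2])
    have bL: "L2 M b" unfolding b_def by (rule L2_diff[OF fL2 dL2])
    have p1: "N2 M (\<lambda>z. a z + b z) = N2 M a + 2 * Re (l2inner M a b) + N2 M b" by (rule N2_expand[OF aL bL])
    have p2: "N2 M (\<lambda>w. a w + (- 1) * b w) = N2 M a - 2 * Re (cnj 1 * l2inner M a b) + (cmod 1)\<^sup>2 * N2 M b"
      by (rule N2_minus_scale[OF aL bL])
    have e1: "(\<lambda>w. a w + (- 1) * b w) = (\<lambda>z. d n z - d m z)" unfolding a_def b_def by auto
    define mid where "mid = (\<lambda>z. (1/2) * (d m z + d n z))"
    have mid: "mid \<in> kernel_span K" unfolding mid_def by (intro ks_scale ks_add dks)
    have e2: "(\<lambda>z. a z + b z) = (\<lambda>z. 2 * (f z - mid z))" unfolding a_def b_def mid_def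
      by (auto simp: algebra_simps)
    have "N2 M (\<lambda>z. a z + b z) = 4 * N2 M (\<lambda>z. f z - mid z)" unfolding e2 N2_scale by simp
    then have "4 * \<eta> \<le> N2 M (\<lambda>z. a z + b z)" using \<eta>_le[OF mid] by simp
    moreover have "N2 M a < \<eta> + inverse (real (Suc m))" "N2 M b < \<eta> + inverse (real (Suc n))"
      using dle unfolding a_def b_def by auto
    ultimately have "N2 M (\<lambda>z. d n z - d m z) \<le> 2 * inverse (real (Suc m)) + 2 * inverse (real (Suc n))"
      using p1 p2 unfolding e1 by simp
    then show ?thesis by (simp add: N2_commute[of M "d m"])
  qed
  have cauchy: "\<forall>e>0. \<exists>N. \<forall>m\<ge>N. \<forall>n\<ge>N. l2norm M (\<lambda>z. d m z - d n z) < e"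
  proof (intro allI impI)
    fix e :: real assume e: "e > 0"
    obtain N where N: "4 / e\<^sup>2 < real (Suc N)" using reals_Archimedean2 by (metis less_Suc_eq of_nat_Suc add.commute less_add_one order.strict_trans)
    have N': "4 * inverse (real (Suc N)) < e\<^sup>2"
      using N e by (simp add: field_simps)
    show "\<exists>N. \<forall>m\<ge>N. \<forall>n\<ge>N. l2norm M (\<lambda>z. d m z - d n z) < e"
    proof (intro exI allI impI)
      fix m n assume mn: "m \<ge> N" "n \<ge> N"
      have "inverse (real (Suc m)) \<le> inverse (real (Suc N))" "inverse (real (Suc n)) \<le> inverse (real (Suc N))"
        using mn by (auto intro!: le_imp_inverse_le)
      then have "N2 M (\<lambda>z. d m z - d n z) < e\<^sup>2" using csq[of m n] N' by linarith
      then have "sqrt (N2 M (\<lambda>z. d m z - d n z)) < sqrt (e\<^sup>2)" by (rule real_sqrt_less_mono)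
      then show "l2norm M (\<lambda>z. d m z - d n z) < e" using e by (simp add: l2norm_N2)
    qed
  qed
  obtain g where g: "g \<in> H" and gc: "(\<lambda>n. l2norm M (\<lambda>z. d n z - g z)) \<longlonglongrightarrow> 0"
    using H_complete[OF ks_sub[OF dks] cauchy] by blast
  have gL2: "L2 M g" using H_L2[OF g] .
  have orth: "l2inner M (\<lambda>w. f w - g w) (K z) = 0" for z
  proof -
    define k where "k = K z"
    have kL: "L2 M k" unfolding k_def using H_L2[OF K_in] .
    define c where "c = l2inner M (\<lambda>w. f w - g w) k"
    define s where "s = 1 / (N2 M k + 1)"
    have sp: "s > 0" unfolding s_def using N2_nonneg[of M k] by simp
    have sk: "s * N2 M k < 1" unfolding s_def using N2_nonneg[of M k] by simp
    define t where "t = complex_of_real s * c"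
    have key: "2 * s * (cmod c)\<^sup>2 \<le> inverse (real (Suc n)) + s\<^sup>2 * (cmod c)\<^sup>2 * N2 M k
                  + 2 * s * cmod c * (l2norm M (\<lambda>w. d n w - g w) * l2norm M k)" for n
    proof -
      define a where "a = (\<lambda>w. f w - d n w)"
      have aL: "L2 M a" unfolding a_def by (rule L2_diff[OF fL2 dL2])
      define cn where "cn = l2inner M a k"
      have "(\<lambda>w. d n w + t * k w) \<in> kernel_span K" unfolding k_def by (intro ks_add ks_scale dks ks_K)
      then have "\<eta> \<le> N2 M (\<lambda>w. f w - (d n w + t * k w))" by (rule \<eta>_le)
      also have "(\<lambda>w. f w - (d n w + t * k w)) = (\<lambda>w. a w + (- t) * k w)" unfolding a_def by auto
      also have "N2 M \<dots> = N2 M a - 2 * Re (cnj t * cn) + (cmod t)\<^sup>2 * N2 M k"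
        unfolding cn_def by (rule N2_minus_scale[OF aL kL])
      finally have i1: "2 * Re (cnj t * cn) \<le> inverse (real (Suc n)) + (cmod t)\<^sup>2 * N2 M k"
        using dle[of n] unfolding a_def by simp
      have "cn - c = l2inner M (\<lambda>w. a w - (f w - g w)) k"
        unfolding cn_def c_def by (rule l2inner_diff_left[symmetric]) (use aL fL2 gL2 kL in \<open>auto intro: L2_diff\<close>)
      also have "(\<lambda>w. a w - (f w - g w)) = (\<lambda>w. g w - d n w)" unfolding a_def by auto
      finally have "cmod (cn - c) \<le> l2norm M (\<lambda>w. g w - d n w) * l2norm M k"
        using CS[OF L2_diff[OF gL2 dL2] kL] by simp
      then have i2: "cmod (cn - c) \<le> l2norm M (\<lambda>w. d n w - g w) * l2norm M k"
        by (simp add: l2norm_commute[of M g])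
      have r1: "Re (cnj t * cn) = Re (cnj t * c) + Re (cnj t * (cn - c))" by (simp add: algebra_simps)
      have r2: "Re (cnj t * c) = s * (cmod c)\<^sup>2" unfolding t_def cmod_power2
        by (simp add: power2_eq_square algebra_simps)
      have r3: "Re (cnj t * (cn - c)) \<ge> - (cmod t * cmod (cn - c))"
        using complex_Re_le_cmod[of "- (cnj t * (cn - c))"] by (simp add: norm_mult)
      from r1 r2 r3 have l1: "s * (cmod c)\<^sup>2 - cmod t * cmod (cn - c) \<le> Re (cnj t * cn)" by linarith
      have ct: "cmod t = s * cmod c" unfolding t_def using sp by (simp add: norm_mult)
      have l2: "cmod t * cmod (cn - c) \<le> cmod t * (l2norm M (\<lambda>w. d n w - g w) * l2norm M k)"
        using i2 by (intro mult_left_mono) auto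
      have l3: "(cmod t)\<^sup>2 * N2 M k = s\<^sup>2 * (cmod c)\<^sup>2 * N2 M k" unfolding ct by (simp add: power_mult_distrib)
      have l4: "cmod t * (l2norm M (\<lambda>w. d n w - g w) * l2norm M k) = s * cmod c * (l2norm M (\<lambda>w. d n w - g w) * l2norm M k)"
        unfolding ct ..
      have "2 * (s * (cmod c)\<^sup>2) \<le> inverse (real (Suc n)) + s\<^sup>2 * (cmod c)\<^sup>2 * N2 M k
                  + 2 * (s * cmod c * (l2norm M (\<lambda>w. d n w - g w) * l2norm M k))"
        using l1 l2 l3 l4 i1 by linarith
      then show ?thesis by (simp only: mult.assoc)
    qed
    have lim: "(\<lambda>n. inverse (real (Suc n)) + s\<^sup>2 * (cmod c)\<^sup>2 * N2 M k
                  + 2 * s * cmod c * (l2norm M (\<lambda>w. d n w - g w) * l2norm M k)) \<longlonglongrightarrow>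
               0 + s\<^sup>2 * (cmod c)\<^sup>2 * N2 M k + 2 * s * cmod c * (0 * l2norm M k)"
      by (intro tendsto_intros LIMSEQ_inverse_real_of_nat gc)
    have "2 * s * (cmod c)\<^sup>2 \<le> 0 + s\<^sup>2 * (cmod c)\<^sup>2 * N2 M k + 2 * s * cmod c * (0 * l2norm M k)"
      by (rule LIMSEQ_le_const[OF lim]) (use key in auto)
    then have "2 * s * (cmod c)\<^sup>2 \<le> s\<^sup>2 * (cmod c)\<^sup>2 * N2 M k" by simp
    from small_orth[OF sp sk _ this] have "(cmod c)\<^sup>2 \<le> 0" by simp
    then show ?thesis unfolding c_def k_def by simp
  qed
  have fg: "f z = g z" for z
  proof -
    have "f z - g z = l2inner M (\<lambda>w. f w - g w) (K z)" by (rule rep[OF H_diff[OF f g]])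
    then show ?thesis using orth[of z] by simp
  qed
  have "f = g" by (rule ext) (rule fg)
  then have "(\<lambda>n. l2norm M (\<lambda>z. d n z - f z)) \<longlonglongrightarrow> 0" using gc by simp
  then show ?thesis using dks by blast
qed

end



locale rk2 = rk M H K for M :: "('g::ab_group_add \<times> 'y) measure" and H K +
  assumes shiftK: "\<And>x y u v. K (x,y) (u,v) = K (0,y) (u - x, v)"
    and Tmeas: "\<And>a. (\<lambda>w. (a + fst w, snd w)) \<in> measurable M M"
    and Tinv: "\<And>a. distr M M (\<lambda>w. (a + fst w, snd w)) = M"
begin

lemma N2_translate:
  assumes [measurable]: "f \<in> borel_measurable M"
  shows "N2 M (\<lambda>w. f (a + fst w, snd w)) = N2 M f"
proof -
  have m: "(\<lambda>z. (cmod (f z))\<^sup>2) \<in> borel_measurable M" by measurable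
  show ?thesis
    using integral_distr[OF Tmeas[of a] m] Tinv[of a] unfolding N2_def by simp
qed

lemma l2norm_translate:
  "f \<in> borel_measurable M \<Longrightarrow> l2norm M (\<lambda>w. f (a + fst w, snd w)) = l2norm M f"
  unfolding l2norm_N2 by (simp add: N2_translate)

lemma K_translate: "K p (a + u, v) = K (fst p - a, snd p) (u, v)"
proof -
  obtain p1 p2 where p: "p = (p1, p2)" by (cases p)
  have "K p (a + u, v) = K (0, p2) (a + u - p1, v)" unfolding p by (rule shiftK)
  also have "\<dots> = K (0, p2) (u - (p1 - a), v)" by (simp add: algebra_simps)
  also have "\<dots> = K (fst p - a, snd p) (u, v)" unfolding p by (simp add: shiftK[of "p1 - a"])
  finally show ?thesis .
qed

lemma ks_translate:
  assumes d: "d \<in> kernel_span K"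
  shows "(\<lambda>w. d (a + fst w, snd w)) \<in> kernel_span K"
proof -
  from d obtain F c where F: "finite F" and dF: "d = (\<lambda>z. \<Sum>p\<in>F. c p * K p z)"
    unfolding kernel_span_def by blast
  define \<phi> where "\<phi> = (\<lambda>p::'g \<times> 'y. (fst p - a, snd p))"
  define \<psi> where "\<psi> = (\<lambda>q::'g \<times> 'y. (fst q + a, snd q))"
  have inj: "inj_on \<phi> F" unfolding \<phi>_def by (rule inj_onI) (auto simp: prod_eq_iff)
  have "(\<lambda>w. d (a + fst w, snd w)) = (\<lambda>w. \<Sum>q\<in>\<phi> ` F. c (\<psi> q) * K q w)"
  proof
    fix w :: "'g \<times> 'y"
    have "d (a + fst w, snd w) = (\<Sum>p\<in>F. c p * K (\<phi> p) w)"
      unfolding dF \<phi>_def using K_translate[of _ a "fst w" "snd w"] by simp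
    also have "\<dots> = (\<Sum>q\<in>\<phi> ` F. c (\<psi> q) * K q w)"
      by (subst sum.reindex[OF inj]) (simp add: \<phi>_def \<psi>_def)
    finally show "d (a + fst w, snd w) = (\<Sum>q\<in>\<phi> ` F. c (\<psi> q) * K q w)" .
  qed
  then show ?thesis unfolding kernel_span_def using F
    by (intro CollectI exI[of _ "\<phi> ` F"] exI[of _ "\<lambda>q. c (\<psi> q)"]) simp
qed

lemma H_translate:
  assumes f: "f \<in> H"
  shows "(\<lambda>w. f (a + fst w, snd w)) \<in> H"
proof -
  obtain d where dks: "\<And>n. d n \<in> kernel_span K" and dc: "(\<lambda>n. l2norm M (\<lambda>z. d n z - f z)) \<longlonglongrightarrow> 0"
    using density[OF f] by blast
  define T where "T = (\<lambda>n w. d n (a + fst w, snd w))"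
  have TH: "T n \<in> H" for n unfolding T_def by (intro ks_sub ks_translate dks)
  have dL: "L2 M (d n)" for n by (rule ks_L2[OF dks])
  have dcau: "\<forall>e>0. \<exists>N. \<forall>m\<ge>N. \<forall>n\<ge>N. l2norm M (\<lambda>z. d m z - d n z) < e"
    by (rule conv_cauchy[OF dL H_L2[OF f] dc])
  have eq: "l2norm M (\<lambda>z. T m z - T n z) = l2norm M (\<lambda>z. d m z - d n z)" for m n
  proof -
    have "(\<lambda>z. d m z - d n z) \<in> borel_measurable M" using L2_meas[OF L2_diff[OF dL dL]] .
    then show ?thesis unfolding T_def by (rule l2norm_translate)
  qed
  have "\<forall>e>0. \<exists>N. \<forall>m\<ge>N. \<forall>n\<ge>N. l2norm M (\<lambda>z. T m z - T n z) < e"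
    unfolding eq by (rule dcau)
  then obtain g where g: "g \<in> H" and gc: "(\<lambda>n. l2norm M (\<lambda>z. T n z - g z)) \<longlonglongrightarrow> 0"
    using H_complete[of T, OF TH] by blast
  have "g w = f (a + fst w, snd w)" for w
  proof -
    have "(\<lambda>n. T n w) \<longlonglongrightarrow> g w" by (rule ptw[OF TH g gc])
    moreover have "(\<lambda>n. d n (a + fst w, snd w)) \<longlonglongrightarrow> f (a + fst w, snd w)"
      by (rule ptw[OF ks_sub[OF dks] f dc])
    ultimately show ?thesis unfolding T_def by (rule LIMSEQ_unique)
  qed
  then have "(\<lambda>w. f (a + fst w, snd w)) = g" by (intro ext) simp
  then show ?thesis using g by simp
qed

lemma main_rev:
  fixes psi :: "'g \<Rightarrow> 'y \<Rightarrow> 'y \<Rightarrow> complex" and S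
  assumes A0: "psi \<in> A0 H"
    and Sdef: "\<And>f z. S f z = l2inner M f (\<lambda>w. cnj (psi (fst z - fst w) (snd z) (snd w)))"
    and bdd: "bdd_above {l2norm M (S f) | f. f \<in> kernel_span K \<and> l2norm M f = 1}"
  shows "(\<forall>f\<in>H. S f \<in> H) \<and> (\<exists>C. \<forall>f\<in>H. l2norm M (S f) \<le> C * l2norm M f)"
proof -
  define h where "h z = (\<lambda>w. cnj (psi (fst z - fst w) (snd z) (snd w)))" for z :: "'g \<times> 'y"
  have Sh: "S f z = l2inner M f (h z)" for f z unfolding h_def by (rule Sdef)
  have hH: "h z \<in> H" for z
  proof -
    have "(\<lambda>(u,v). cnj (psi (-u) (snd z) v)) \<in> H" using A0 unfolding A0_def by blast
    from H_translate[OF this, of "- fst z"]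
    have "(\<lambda>w. (\<lambda>(u,v). cnj (psi (-u) (snd z) v)) (- fst z + fst w, snd w)) \<in> H" .
    moreover have "(\<lambda>w. (\<lambda>(u,v). cnj (psi (-u) (snd z) v)) (- fst z + fst w, snd w)) = h z"
      unfolding h_def by (auto simp: algebra_simps)
    ultimately show ?thesis by simp
  qed
  have hL: "L2 M (h z)" for z by (rule H_L2[OF hH])
  have SK: "S (K p) \<in> H" for p
  proof -
    have "(\<lambda>(u,y). psi u y (snd p)) \<in> H" using A0 unfolding A0_def by blast
    from H_translate[OF this, of "- fst p"]
    have "(\<lambda>w. (\<lambda>(u,y). psi u y (snd p)) (- fst p + fst w, snd w)) \<in> H" .
    moreover have "(\<lambda>w. (\<lambda>(u,y). psi u y (snd p)) (- fst p + fst w, snd w)) = S (K p)"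
    proof
      fix z
      have "S (K p) z = cnj (l2inner M (h z) (K p))" unfolding Sh by (rule l2inner_cnj)
      also have "\<dots> = cnj (h z p)" using rep[OF hH] by simp
      also have "\<dots> = psi (- fst p + fst z) (snd z) (snd p)" unfolding h_def by (simp add: algebra_simps)
      finally show "(\<lambda>(u,y). psi u y (snd p)) (- fst p + fst z, snd z) = S (K p) z" by simp
    qed
    ultimately show ?thesis by simp
  qed
  have Sks: "S d \<in> H" if d: "d \<in> kernel_span K" for d
  proof -
    from d obtain F c where F: "finite F" and dF: "d = (\<lambda>z. \<Sum>p\<in>F. c p * K p z)"
      unfolding kernel_span_def by blast
    have "S d = (\<lambda>z. \<Sum>p\<in>F. c p * S (K p) z)"
    proof
      fix z
      show "S d z = (\<Sum>p\<in>F. c p * S (K p) z)"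
        unfolding Sh dF by (rule l2inner_sum_left[OF F H_L2[OF K_in] hL])
    qed
    then show ?thesis using H_sum[OF F SK] by simp
  qed
  have Sdiff: "S (\<lambda>z. a z - b z) = (\<lambda>z. S a z - S b z)" if "L2 M a" "L2 M b" for a b
    unfolding Sh by (rule ext, rule l2inner_diff_left[OF that hL])
  have Sscale: "S (\<lambda>z. c * a z) = (\<lambda>z. c * S a z)" for c a
    unfolding Sh by (rule ext, rule l2inner_scale_left)
  obtain C0 where C0: "\<And>x. x \<in> {l2norm M (S f) | f. f \<in> kernel_span K \<and> l2norm M f = 1} \<Longrightarrow> x \<le> C0"
    using bdd unfolding bdd_above_def by blast
  define C where "C = max C0 0"
  have Cnn: "C \<ge> 0" unfolding C_def by simp
  have SD: "l2norm M (S d) \<le> C * l2norm M d" if d: "d \<in> kernel_span K" for d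
  proof (cases "l2norm M d = 0")
    case True
    have "d = (\<lambda>z. 0)" using zero_norm[OF ks_sub[OF d] True] by (intro ext) simp
    then have "S d = (\<lambda>z. 0)" unfolding Sh by (intro ext) (simp add: l2inner_def)
    then show ?thesis using True by (simp add: l2norm_zero)
  next
    case False
    then have np: "l2norm M d > 0" using l2norm_nonneg[of M d] by simp
    define d' where "d' = (\<lambda>z. complex_of_real (1 / l2norm M d) * d z)"
    have d'ks: "d' \<in> kernel_span K" unfolding d'_def by (rule ks_scale[OF d])
    have "l2norm M d' = 1" unfolding d'_def l2norm_scale using np by (simp add: norm_divide)
    then have "l2norm M (S d') \<le> C0" using d'ks by (intro C0 CollectI exI[of _ d']) simp
    moreover have "l2norm M (S d') = l2norm M (S d) / l2norm M d"
      unfolding d'_def Sscale l2norm_scale using np by (simp add: norm_divide)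
    ultimately have "l2norm M (S d) \<le> C0 * l2norm M d" using np by (simp add: divide_le_eq)
    also have "\<dots> \<le> C * l2norm M d" unfolding C_def using np by (intro mult_right_mono) auto
    finally show ?thesis .
  qed
  have main: "S f \<in> H \<and> l2norm M (S f) \<le> C * l2norm M f" if f: "f \<in> H" for f
  proof -
    obtain d where dks: "\<And>n. d n \<in> kernel_span K" and dc: "(\<lambda>n. l2norm M (\<lambda>z. d n z - f z)) \<longlonglongrightarrow> 0"
      using density[OF f] by blast
    have dL: "L2 M (d n)" for n by (rule ks_L2[OF dks])
    have fL: "L2 M f" by (rule H_L2[OF f])
    have SdH: "S (d n) \<in> H" for n by (rule Sks[OF dks])
    have dcau: "\<forall>e>0. \<exists>N. \<forall>m\<ge>N. \<forall>n\<ge>N. l2norm M (\<lambda>z. d m z - d n z) < e"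
      by (rule conv_cauchy[OF dL fL dc])
    have Sle: "l2norm M (\<lambda>z. S (d m) z - S (d n) z) \<le> C * l2norm M (\<lambda>z. d m z - d n z)" for m n
      using SD[OF ks_diff[OF dks dks]] Sdiff[OF dL dL] by simp
    have "\<forall>e>0. \<exists>N. \<forall>m\<ge>N. \<forall>n\<ge>N. l2norm M (\<lambda>z. S (d m) z - S (d n) z) < e"
    proof (intro allI impI)
      fix e :: real assume e: "e > 0"
      then have "e / (C + 1) > 0" using Cnn by simp
      with dcau obtain N where N: "\<And>m n. m \<ge> N \<Longrightarrow> n \<ge> N \<Longrightarrow> l2norm M (\<lambda>z. d m z - d n z) < e / (C + 1)"
        by blast
      show "\<exists>N. \<forall>m\<ge>N. \<forall>n\<ge>N. l2norm M (\<lambda>z. S (d m) z - S (d n) z) < e"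
      proof (intro exI allI impI)
        fix m n assume mn: "m \<ge> N" "n \<ge> N"
        have "C * l2norm M (\<lambda>z. d m z - d n z) \<le> C * (e / (C + 1))"
          using N[OF mn] Cnn by (intro mult_left_mono) auto
        also have "\<dots> < e" using e Cnn by (simp add: field_simps)
        finally show "l2norm M (\<lambda>z. S (d m) z - S (d n) z) < e" using Sle[of m n] by linarith
      qed
    qed
    from H_complete[of "\<lambda>n. S (d n)", OF SdH this] obtain g where g: "g \<in> H" and gc: "(\<lambda>n. l2norm M (\<lambda>z. S (d n) z - g z)) \<longlonglongrightarrow> 0"
      by blast
    have gS: "g z = S f z" for z
    proof -
      have "(\<lambda>n. S (d n) z) \<longlonglongrightarrow> g z" by (rule ptw[OF SdH g gc])
      moreover have "(\<lambda>n. S (d n) z) \<longlonglongrightarrow> S f z"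
        unfolding Sh by (rule inner_conv[OF hL dL fL dc])
      ultimately show ?thesis by (rule LIMSEQ_unique)
    qed
    have Sfg: "S f = g" by (rule ext) (rule gS[symmetric])
    have gL: "L2 M g" by (rule H_L2[OF g])
    have bnd: "l2norm M g \<le> l2norm M (\<lambda>z. S (d n) z - g z) + C * (l2norm M (\<lambda>z. d n z - f z) + l2norm M f)" for n
    proof -
      have b1: "l2norm M g \<le> l2norm M (\<lambda>z. g z - S (d n) z) + l2norm M (\<lambda>z. S (d n) z - (\<lambda>z. 0) z)"
        using l2norm_tri3[OF gL H_L2[OF SdH] L2_zero] by simp
      have b2: "l2norm M (\<lambda>z. g z - S (d n) z) = l2norm M (\<lambda>z. S (d n) z - g z)"
        by (rule l2norm_commute)
      have b3: "l2norm M (\<lambda>z. S (d n) z - (\<lambda>z. 0) z) = l2norm M (S (d n))" by simp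
      have b4: "l2norm M (S (d n)) \<le> C * l2norm M (d n)" by (rule SD[OF dks])
      have b5: "l2norm M (d n) \<le> l2norm M (\<lambda>z. d n z - f z) + l2norm M f"
        using l2norm_tri3[OF dL fL L2_zero] by simp
      have b6: "C * l2norm M (d n) \<le> C * (l2norm M (\<lambda>z. d n z - f z) + l2norm M f)"
        using b5 Cnn by (rule mult_left_mono)
      show ?thesis using b1 b2 b3 b4 b6 by linarith
    qed
    have lim: "(\<lambda>n. l2norm M (\<lambda>z. S (d n) z - g z) + C * (l2norm M (\<lambda>z. d n z - f z) + l2norm M f))
               \<longlonglongrightarrow> 0 + C * (0 + l2norm M f)"
      by (intro tendsto_intros gc dc)
    have "l2norm M g \<le> 0 + C * (0 + l2norm M f)"
      by (rule LIMSEQ_le_const[OF lim]) (use bnd in auto)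
    then show ?thesis using Sfg g by simp
  qed
  have m1: "\<forall>f\<in>H. S f \<in> H" using main by simp
  have m2: "\<forall>f\<in>H. l2norm M (S f) \<le> C * l2norm M f" using main by simp
  show ?thesis using m1 m2 by (intro conjI exI[of _ C])
qed

end


theorem proposition5p8:
  fixes nu :: "'g::{topological_ab_group_add, t2_space} measure"
    and lam :: "'y measure"
    and H :: "('g \<times> 'y \<Rightarrow> complex) set"
    and K :: "'g \<times> 'y \<Rightarrow> 'g \<times> 'y \<Rightarrow> complex"
    and psi :: "'g \<Rightarrow> 'y \<Rightarrow> 'y \<Rightarrow> complex"
  assumes "locally compact (UNIV :: 'g set)"
    and "haar_measure nu"
    and "space lam = UNIV"
    and "rkhs_L2 (nu \<Otimes>\<^sub>M lam) H K"
    and "\<And>x y u v. K (x, y) (u, v) = K (0, y) (u - x, v)"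
  shows "psi \<in> A_class nu lam H \<longleftrightarrow>
           psi \<in> A0 H \<and>
           bdd_above {l2norm (nu \<Otimes>\<^sub>M lam) (S_op nu lam psi f) | f.
                        f \<in> kernel_span K \<and> l2norm (nu \<Otimes>\<^sub>M lam) f = 1}"
proof -
  have sets: "sets nu = sets borel" and inv: "\<And>a. distr nu nu (\<lambda>u. a + u) = nu"
    using assms(2) unfolding haar_measure_def by auto
  interpret rk2 "nu \<Otimes>\<^sub>M lam" H K
  proof unfold_locales
    show "rkhs_L2 (nu \<Otimes>\<^sub>M lam) H K" by (rule assms(4))
    show "\<And>x y u v. K (x, y) (u, v) = K (0, y) (u - x, v)" by (rule assms(5))
    show "\<And>a. (\<lambda>w. (a + fst w, snd w)) \<in> measurable (nu \<Otimes>\<^sub>M lam) (nu \<Otimes>\<^sub>M lam)"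
      by (rule pair_translate(1)[OF sets inv assms(3)])
    show "\<And>a. distr (nu \<Otimes>\<^sub>M lam) (nu \<Otimes>\<^sub>M lam) (\<lambda>w. (a + fst w, snd w)) = nu \<Otimes>\<^sub>M lam"
      by (rule pair_translate(2)[OF sets inv assms(3)])
  qed
  have Sdef: "S_op nu lam psi f z = l2inner (nu \<Otimes>\<^sub>M lam) f (\<lambda>w. cnj (psi (fst z - fst w) (snd z) (snd w)))" for f z
  proof -
    have "(\<lambda>(u,v). f (u,v) * psi (fst z - u) (snd z) v) = (\<lambda>w. f w * cnj (cnj (psi (fst z - fst w) (snd z) (snd w))))"
      by (auto simp: fun_eq_iff)
    then show ?thesis unfolding S_op_def l2inner_def by (simp add: case_prod_beta)
  qed
  show ?thesis
  proof
    assume a: "psi \<in> A_class nu lam H"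
    then have A: "psi \<in> A0 H" unfolding A_class_def by simp
    from a obtain C where C: "\<And>f. f \<in> H \<Longrightarrow> l2norm (nu \<Otimes>\<^sub>M lam) (S_op nu lam psi f) \<le> C * l2norm (nu \<Otimes>\<^sub>M lam) f"
      unfolding A_class_def bounded_on_def by blast
    have "bdd_above {l2norm (nu \<Otimes>\<^sub>M lam) (S_op nu lam psi f) | f.
                        f \<in> kernel_span K \<and> l2norm (nu \<Otimes>\<^sub>M lam) f = 1}"
    proof (rule bdd_aboveI[of _ C])
      fix x assume "x \<in> {l2norm (nu \<Otimes>\<^sub>M lam) (S_op nu lam psi f) | f.
                        f \<in> kernel_span K \<and> l2norm (nu \<Otimes>\<^sub>M lam) f = 1}"
      then obtain f where f: "f \<in> kernel_span K" "l2norm (nu \<Otimes>\<^sub>M lam) f = 1"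
        and x: "x = l2norm (nu \<Otimes>\<^sub>M lam) (S_op nu lam psi f)" by blast
      show "x \<le> C" using C[OF ks_sub[OF f(1)]] f(2) x by simp
    qed
    then show "psi \<in> A0 H \<and> bdd_above {l2norm (nu \<Otimes>\<^sub>M lam) (S_op nu lam psi f) | f.
                        f \<in> kernel_span K \<and> l2norm (nu \<Otimes>\<^sub>M lam) f = 1}" using A by simp
  next
    assume a: "psi \<in> A0 H \<and> bdd_above {l2norm (nu \<Otimes>\<^sub>M lam) (S_op nu lam psi f) | f.
                        f \<in> kernel_span K \<and> l2norm (nu \<Otimes>\<^sub>M lam) f = 1}"
    have "(\<forall>f\<in>H. S_op nu lam psi f \<in> H) \<and> (\<exists>C. \<forall>f\<in>H. l2norm (nu \<Otimes>\<^sub>M lam) (S_op nu lam psi f) \<le> C * l2norm (nu \<Otimes>\<^sub>M lam) f)"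
      by (rule main_rev[of psi "S_op nu lam psi"]) (use a Sdef in auto)
    then show "psi \<in> A_class nu lam H" using a unfolding A_class_def bounded_on_def by simp
  qed
qed

end
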